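(* The group $\mathscr G^{\mathrm{1cas}}_{\rho}$ contains elements with stationary, hence uncountable, row-support, and therefore elements with uncountable total support. Consequently, via any coordinate relabeling of the forcing, the cascade system $(\mathbb P_1,\mathscr G^{\mathrm{1cas}}_\rho,\mathscr F^{\mathrm{1cas}}_\rho)$ is not conjugate to any symmetric system on $\mathbb P_1$ whose automorphism group consists entirely of elements with countable total support.
   Context: Over a ground model $V$ of ZFC, $\mathbb P_0$ is the forcing of finite partial regressive functions on $\omega_1$; for $V$-generic $G_0$, $\rho:\omega_1\setminus\{0\}\to\omega_1$ is the induced total regressive map, $\operatorname{Succ}_\rho(\xi)=\{\eta:\rho(\eta)=\xi\}$, $\operatorname{cl}_\rho(A)$ the least $\rho$-closed superset of $A$. In $V[G_0]$, $\mathbb P_1=\operatorname{Fn}(\omega_1\times\omega\times\omega,2,{<}\omega)$. For $\xi<\omega_1$, $i<\omega$, $s\subseteq\omega$ finite or cofinite, $\tau^{\mathrm{1cas}}_{\xi,i,s}$ is the automorphism of $\mathbb P_1$ flipping the value of a condition at each coordinate $(\zeta,i,n)$ with $n\in s$ and $\zeta\in\{\xi\}\cup\operatorname{Succ}_\rho(\xi)$. $\mathscr G^{\mathrm{1cas}}_\rho$ is the group generated by them; $\operatorname{Fix}^{\mathrm{1cas}}_\rho(A)$ is the subgroup acting trivially on coordinates $(\zeta,j,n)$ with $\zeta\in\operatorname{cl}_\rho(A)$; $\mathscr F^{\mathrm{1cas}}_\rho$ is the filter generated by these for countable $A$. The total support of an automorphism is the set of coordinates $(\eta,j,n)$ on which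 it acts nontrivially; its row-support is the set of $\eta<\omega_1$ such that it acts nontrivially on some coordinate $(\eta,j,n)$. A coordinate relabeling is a bijection of $\omega_1\times\omega\times\omega$, inducing an automorphism of $\mathbb P_1$ by which groups of automorphisms are conjugated. *)

theory Defs
  imports Main "HOL-Library.Countable_Set"
begin

text \<open>omega_1 is modelled by a well-ordered type 'a which is uncountable and all of
whose proper initial segments are countable (this characterises omega_1 up to
isomorphism).\<close>

definition is_omega1_type :: "'a::wellorder itself \<Rightarrow> bool" where
  "is_omega1_type _ \<longleftrightarrow> \<not> countable (UNIV :: 'a set) \<and> (\<forall>\<alpha>::'a. countable {\<beta>. \<beta> < \<alpha>})"

definition ozero :: "'a::wellorder" where
  "ozero = (LEAST x. True)"

definition unbounded_set :: "'a::wellorder set \<Rightarrow> bool" where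
  "unbounded_set C \<longleftrightarrow> (\<forall>\<beta>. \<exists>\<gamma>\<in>C. \<beta> < \<gamma>)"

definition closed_set :: "'a::wellorder set \<Rightarrow> bool" where
  "closed_set C \<longleftrightarrow> (\<forall>\<alpha>. ((\<exists>\<beta>. \<beta> < \<alpha>) \<and> (\<forall>\<beta><\<alpha>. \<exists>\<gamma>\<in>C. \<beta> < \<gamma> \<and> \<gamma> < \<alpha>)) \<longrightarrow> \<alpha> \<in> C)"

definition club :: "'a::wellorder set \<Rightarrow> bool" where
  "club C \<longleftrightarrow> closed_set C \<and> unbounded_set C"

definition stationary :: "'a::wellorder set \<Rightarrow> bool" where
  "stationary S \<longleftrightarrow> (\<forall>C. club C \<longrightarrow> S \<inter> C \<noteq> {})"

definition regressive :: "('a::wellorder \<Rightarrow> 'a) \<Rightarrow> bool" where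
  "regressive \<rho> \<longleftrightarrow> (\<forall>\<eta>. \<eta> \<noteq> ozero \<longrightarrow> \<rho> \<eta> < \<eta>)"

definition Succ :: "('a::wellorder \<Rightarrow> 'a) \<Rightarrow> 'a \<Rightarrow> 'a set" where
  "Succ \<rho> \<xi> = {\<eta>. \<eta> \<noteq> ozero \<and> \<rho> \<eta> = \<xi>}"

inductive_set clrho :: "('a::wellorder \<Rightarrow> 'a) \<Rightarrow> 'a set \<Rightarrow> 'a set" for \<rho> A where
  base: "x \<in> A \<Longrightarrow> x \<in> clrho \<rho> A"
| step: "x \<in> clrho \<rho> A \<Longrightarrow> x \<noteq> ozero \<Longrightarrow> \<rho> x \<in> clrho \<rho> A"

text \<open>Conditions of P1 = Fn(omega_1 \<times> omega \<times> omega, 2, <omega): finite partial functions.\<close>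
type_synonym 'a coord = "'a \<times> nat \<times> nat"
type_synonym 'a cond = "'a coord \<rightharpoonup> bool"

definition P1 :: "'a cond set" where
  "P1 = {p. finite (dom p)}"

text \<open>q extends p (q is stronger than p).\<close>
definition ext_le :: "'a cond \<Rightarrow> 'a cond \<Rightarrow> bool" where
  "ext_le q p \<longleftrightarrow> p \<subseteq>\<^sub>m q"

definition is_automorphism :: "('a cond \<Rightarrow> 'a cond) \<Rightarrow> bool" where
  "is_automorphism e \<longleftrightarrow> bij_betw e P1 P1 \<and>
     (\<forall>p\<in>P1. \<forall>q\<in>P1. ext_le (e q) (e p) \<longleftrightarrow> ext_le q p)"

definition flip :: "'a coord set \<Rightarrow> 'a cond \<Rightarrow> 'a cond" where
  "flip X p = (\<lambda>c. map_option (\<lambda>b. if c \<in> X then \<not> b else b) (p c))"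

definition tau1cas :: "('a::wellorder \<Rightarrow> 'a) \<Rightarrow> 'a \<Rightarrow> nat \<Rightarrow> nat set \<Rightarrow> 'a cond \<Rightarrow> 'a cond" where
  "tau1cas \<rho> \<xi> i s = flip (({\<xi>} \<union> Succ \<rho> \<xi>) \<times> {i} \<times> s)"

definition gens1cas :: "('a::wellorder \<Rightarrow> 'a) \<Rightarrow> ('a cond \<Rightarrow> 'a cond) set" where
  "gens1cas \<rho> = {tau1cas \<rho> \<xi> i s | \<xi> i s. finite s \<or> finite (- s)}"

inductive_set G1cas :: "('a::wellorder \<Rightarrow> 'a) \<Rightarrow> ('a cond \<Rightarrow> 'a cond) set" for \<rho> where
  gen: "g \<in> gens1cas \<rho> \<Longrightarrow> g \<in> G1cas \<rho>"
| ident: "id \<in> G1cas \<rho>"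
| comp: "g \<in> G1cas \<rho> \<Longrightarrow> h \<in> G1cas \<rho> \<Longrightarrow> g \<circ> h \<in> G1cas \<rho>"
| inverse: "g \<in> G1cas \<rho> \<Longrightarrow> inv_into P1 g \<in> G1cas \<rho>"

definition tsupp :: "('a cond \<Rightarrow> 'a cond) \<Rightarrow> 'a coord set" where
  "tsupp e = {c. \<exists>p\<in>P1. e p c \<noteq> p c}"

definition row_supp :: "('a cond \<Rightarrow> 'a cond) \<Rightarrow> 'a set" where
  "row_supp e = fst ` tsupp e"

definition Fix1cas :: "('a::wellorder \<Rightarrow> 'a) \<Rightarrow> 'a set \<Rightarrow> ('a cond \<Rightarrow> 'a cond) set" where
  "Fix1cas \<rho> A = {g \<in> G1cas \<rho>. \<forall>\<zeta>\<in>clrho \<rho> A. \<forall>j n. (\<zeta>, j, n) \<notin> tsupp g}"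

definition is_subgroup :: "('a cond \<Rightarrow> 'a cond) set \<Rightarrow> ('a cond \<Rightarrow> 'a cond) set \<Rightarrow> bool" where
  "is_subgroup K H \<longleftrightarrow> K \<subseteq> H \<and> id \<in> K \<and> (\<forall>g\<in>K. \<forall>h\<in>K. g \<circ> h \<in> K)
     \<and> (\<forall>g\<in>K. inv_into P1 g \<in> K)"

definition F1cas :: "('a::wellorder \<Rightarrow> 'a) \<Rightarrow> ('a cond \<Rightarrow> 'a cond) set set" where
  "F1cas \<rho> = {K. is_subgroup K (G1cas \<rho>) \<and> (\<exists>A. countable A \<and> Fix1cas \<rho> A \<subseteq> K)}"

text \<open>Symmetric systems on P1: a group of automorphisms with a normal filter of subgroups.\<close>
definition symmetric_system :: "('a cond \<Rightarrow> 'a cond) set \<Rightarrow> ('a cond \<Rightarrow> 'a cond) set set \<Rightarrow> bool" where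
  "symmetric_system H F \<longleftrightarrow>
     (\<forall>h\<in>H. is_automorphism h) \<and> is_subgroup H H \<and>
     H \<in> F \<and> (\<forall>K\<in>F. is_subgroup K H) \<and>
     (\<forall>K\<in>F. \<forall>L. is_subgroup L H \<and> K \<subseteq> L \<longrightarrow> L \<in> F) \<and>
     (\<forall>K\<in>F. \<forall>L\<in>F. K \<inter> L \<in> F) \<and>
     (\<forall>K\<in>F. \<forall>h\<in>H. {h \<circ> k \<circ> inv_into P1 h | k. k \<in> K} \<in> F)"

definition relabel :: "('a coord \<Rightarrow> 'a coord) \<Rightarrow> 'a cond \<Rightarrow> 'a cond" where
  "relabel \<pi> p = p \<circ> inv \<pi>"

definition conj_group :: "('a coord \<Rightarrow> 'a coord) \<Rightarrow> ('a cond \<Rightarrow> 'a cond) set \<Rightarrow> ('a cond \<Rightarrow> 'a cond) set" where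
  "conj_group \<pi> G = {relabel \<pi> \<circ> g \<circ> relabel (inv \<pi>) | g. g \<in> G}"

definition conj_filter :: "('a coord \<Rightarrow> 'a coord) \<Rightarrow> ('a cond \<Rightarrow> 'a cond) set set \<Rightarrow> ('a cond \<Rightarrow> 'a cond) set set" where
  "conj_filter \<pi> F = conj_group \<pi> ` F"

end

theory Submission
  imports Defs
begin

lemma countable_bounded:
  assumes om: "is_omega1_type TYPE('a::wellorder)" and cS: "countable (S::'a set)"
  shows "\<exists>b. \<forall>s\<in>S. s < b"
proof (rule ccontr)
  assume "\<not> ?thesis"
  hence h: "\<forall>b. \<exists>s\<in>S. b \<le> s" by (auto simp: not_less)
  have "(UNIV::'a set) \<subseteq> S \<union> (\<Union>s\<in>S. {\<beta>. \<beta> < s})"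
  proof
    fix b :: 'a
    obtain s where "s \<in> S" "b \<le> s" using h by blast
    thus "b \<in> S \<union> (\<Union>s\<in>S. {\<beta>. \<beta> < s})" using order.not_eq_order_implies_strict by fastforce
  qed
  moreover have "countable (S \<union> (\<Union>s\<in>S. {\<beta>. \<beta> < s}))"
    using om cS unfolding is_omega1_type_def by auto
  ultimately show False using om unfolding is_omega1_type_def
    using countable_subset by blast
qed

lemma stationary_uncountable:
  assumes om: "is_omega1_type TYPE('a::wellorder)" and st: "stationary (S::'a set)"
  shows "\<not> countable S"
proof
  assume "countable S"
  then obtain b where b: "\<forall>s\<in>S. s < b" using countable_bounded om by blast
  define C where "C = {\<gamma>. b < \<gamma>}"
  have "unbounded_set C" unfolding unbounded_set_def C_def
  proof
    fix \<beta>
    obtain c where "\<forall>s\<in>{max \<beta> b}. s < c" using countable_bounded[OF om, of "{max \<beta> b}"] by blast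
    thus "\<exists>\<gamma>\<in>{\<gamma>. b < \<gamma>}. \<beta> < \<gamma>" by auto
  qed
  moreover have "closed_set C" unfolding closed_set_def C_def
  proof (intro allI impI)
    fix \<alpha> :: 'a
    assume a: "(\<exists>\<beta>. \<beta> < \<alpha>) \<and> (\<forall>\<beta><\<alpha>. \<exists>\<gamma>\<in>{\<gamma>. b < \<gamma>}. \<beta> < \<gamma> \<and> \<gamma> < \<alpha>)"
    then obtain \<beta> where "\<beta> < \<alpha>" by blast
    with a obtain \<gamma> where "b < \<gamma>" "\<gamma> < \<alpha>" by blast
    thus "\<alpha> \<in> {\<gamma>. b < \<gamma>}" by auto
  qed
  ultimately have "club C" unfolding club_def by blast
  hence "S \<inter> C \<noteq> {}" using st unfolding stationary_def by blast
  thus False using b unfolding C_def by auto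
qed

lemma fodor:
  assumes om: "is_omega1_type TYPE('a::wellorder)" and reg: "regressive (\<rho>::'a \<Rightarrow> 'a)"
  shows "\<exists>\<xi>. stationary (Succ \<rho> \<xi>)"
proof (rule ccontr)
  assume "\<not> ?thesis"
  hence "\<forall>\<xi>. \<exists>C. club C \<and> Succ \<rho> \<xi> \<inter> C = {}" unfolding stationary_def by blast
  then obtain C where C: "\<And>\<xi>. club (C \<xi>)" "\<And>\<xi>. Succ \<rho> \<xi> \<inter> C \<xi> = {}" by metis
  have step: "\<exists>\<beta>'. \<beta> < \<beta>' \<and> (\<forall>\<xi>\<le>\<beta>. \<exists>\<gamma>\<in>C \<xi>. \<beta> < \<gamma> \<and> \<gamma> < \<beta>')" for \<beta>
  proof -
    have "\<forall>\<xi>. \<exists>\<gamma>\<in>C \<xi>. \<beta> < \<gamma>" using C(1) unfolding club_def unbounded_set_def by blast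
    then obtain g where g: "\<And>\<xi>. g \<xi> \<in> C \<xi> \<and> \<beta> < g \<xi>" by metis
    have "{\<xi>. \<xi> \<le> \<beta>} = {\<xi>. \<xi> < \<beta>} \<union> {\<beta>}" by auto
    hence "countable {\<xi>. \<xi> \<le> \<beta>}" using om unfolding is_omega1_type_def by simp
    hence "countable (g ` {\<xi>. \<xi> \<le> \<beta>} \<union> {\<beta>})" by simp
    then obtain b where b: "\<forall>s\<in>g ` {\<xi>. \<xi> \<le> \<beta>} \<union> {\<beta>}. s < b" using countable_bounded om by blast
    show ?thesis using b g by (intro exI[of _ b]) auto
  qed
  then obtain nxt where nxt: "\<And>\<beta>. \<beta> < nxt \<beta> \<and> (\<forall>\<xi>\<le>\<beta>. \<exists>\<gamma>\<in>C \<xi>. \<beta> < \<gamma> \<and> \<gamma> < nxt \<beta>)"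
    by metis
  define seq where "seq n = (nxt ^^ n) ozero" for n
  have seqS: "seq (Suc n) = nxt (seq n)" for n unfolding seq_def by simp
  have sm: "seq n < seq (Suc n)" for n using nxt seqS by simp
  hence smono: "strict_mono seq" using strict_mono_Suc_iff by blast
  have mono_le: "n \<le> m \<Longrightarrow> seq n \<le> seq m" for n m
    using smono by (metis le_less strict_mono_less)
  have "countable (range seq)" by simp
  then obtain b where b: "\<forall>s\<in>range seq. s < b" using countable_bounded om by blast
  define \<alpha> where "\<alpha> = (LEAST x. \<forall>n. seq n \<le> x)"
  have ub: "\<forall>n. seq n \<le> \<alpha>" unfolding \<alpha>_def
    by (rule LeastI[of _ b]) (use b less_imp_le in blast)
  have ub2: "seq n < \<alpha>" for n using sm[of n] ub by (meson less_le_trans)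
  have below: "x < \<alpha> \<Longrightarrow> \<exists>n. x < seq n" for x
  proof (rule ccontr)
    assume "x < \<alpha>" "\<not> (\<exists>n. x < seq n)"
    hence "\<forall>n. seq n \<le> x" by (auto simp: not_less)
    hence "\<alpha> \<le> x" unfolding \<alpha>_def by (rule Least_le)
    thus False using \<open>x < \<alpha>\<close> by simp
  qed
  have "seq 0 = ozero" unfolding seq_def by simp
  hence nz: "\<alpha> \<noteq> ozero" using ub2[of 0] by auto
  define \<xi> where "\<xi> = \<rho> \<alpha>"
  have "\<xi> < \<alpha>" using reg nz unfolding regressive_def \<xi>_def by blast
  then obtain m where m: "\<xi> < seq m" using below by blast
  have "\<alpha> \<in> C \<xi>"
  proof -
    have cl: "closed_set (C \<xi>)" using C(1) unfolding club_def by blast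
    have "\<forall>\<beta><\<alpha>. \<exists>\<gamma>\<in>C \<xi>. \<beta> < \<gamma> \<and> \<gamma> < \<alpha>"
    proof (intro allI impI)
      fix \<beta> assume "\<beta> < \<alpha>"
      then obtain n where n: "\<beta> < seq n" using below by blast
      define k where "k = max n m"
      have "seq n \<le> seq k" "seq m \<le> seq k" using mono_le unfolding k_def by auto
      hence "\<xi> \<le> seq k" using m by simp
      then obtain \<gamma> where "\<gamma> \<in> C \<xi>" "seq k < \<gamma>" "\<gamma> < nxt (seq k)" using nxt by blast
      moreover have "nxt (seq k) < \<alpha>" using ub2[of "Suc k"] seqS by simp
      ultimately show "\<exists>\<gamma>\<in>C \<xi>. \<beta> < \<gamma> \<and> \<gamma> < \<alpha>"
        using n \<open>seq n \<le> seq k\<close> by (meson le_less_trans less_trans)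
    qed
    moreover have "\<exists>\<beta>. \<beta> < \<alpha>" using ub2 by blast
    ultimately show ?thesis using cl unfolding closed_set_def by blast
  qed
  moreover have "\<alpha> \<in> Succ \<rho> \<xi>" unfolding Succ_def \<xi>_def using nz by simp
  ultimately show False using C(2)[of \<xi>] by blast
qed

lemma flip_tsupp:
  assumes "c \<in> X"
  shows "c \<in> tsupp (flip X)"
proof -
  let ?p = "[c \<mapsto> True] :: 'a cond"
  have "?p \<in> P1" unfolding P1_def by simp
  moreover have "flip X ?p c \<noteq> ?p c" using assms unfolding flip_def by simp
  ultimately show ?thesis unfolding tsupp_def by blast
qed

lemma conj_tsupp:
  assumes bij: "bij \<pi>" and c: "c \<in> X"
  shows "\<pi> c \<in> tsupp (relabel \<pi> \<circ> flip X \<circ> relabel (inv \<pi>))"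
proof -
  let ?p = "[\<pi> c \<mapsto> True] :: 'a cond"
  have "?p \<in> P1" unfolding P1_def by simp
  moreover have "inv (inv \<pi>) = \<pi>" using bij by (simp add: inv_inv_eq)
  moreover have "inv \<pi> (\<pi> c) = c" using bij by (simp add: bij_is_inj)
  ultimately have "(relabel \<pi> \<circ> flip X \<circ> relabel (inv \<pi>)) ?p (\<pi> c) \<noteq> ?p (\<pi> c)"
    using c unfolding relabel_def flip_def by simp
  thus ?thesis using \<open>?p \<in> P1\<close> unfolding tsupp_def by blast
qed

theorem proposition2p11:
  fixes \<rho> :: "'a::wellorder \<Rightarrow> 'a"
  assumes "is_omega1_type TYPE('a)"
    and "regressive \<rho>"
  shows "(\<exists>g\<in>G1cas \<rho>. stationary (row_supp g) \<and> \<not> countable (row_supp g))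
    \<and> (\<exists>g\<in>G1cas \<rho>. \<not> countable (tsupp g))
    \<and> (\<forall>\<pi>. bij \<pi> \<longrightarrow> \<not> (\<exists>H F. symmetric_system H F \<and> (\<forall>h\<in>H. countable (tsupp h))
             \<and> conj_group \<pi> (G1cas \<rho>) = H \<and> conj_filter \<pi> (F1cas \<rho>) = F))"
proof -
  obtain \<xi> where st: "stationary (Succ \<rho> \<xi>)" using fodor assms by blast
  define X where "X = ({\<xi>} \<union> Succ \<rho> \<xi>) \<times> {0::nat} \<times> {0::nat}"
  define g where "g = tau1cas \<rho> \<xi> 0 {0}"
  have gX: "g = flip X" unfolding g_def X_def tau1cas_def by simp
  have gG: "g \<in> G1cas \<rho>" unfolding g_def by (rule G1cas.gen) (auto simp: gens1cas_def)
  have Xt: "X \<subseteq> tsupp g" using gX flip_tsupp by blast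
  have "Succ \<rho> \<xi> \<subseteq> fst ` X" unfolding X_def by force
  hence sub: "Succ \<rho> \<xi> \<subseteq> row_supp g" using Xt unfolding row_supp_def by blast
  have st2: "stationary (row_supp g)" using st sub unfolding stationary_def by blast
  have unc: "\<not> countable (row_supp g)" using stationary_uncountable[OF assms(1) st2] .
  have unc2: "\<not> countable (tsupp g)" using unc unfolding row_supp_def by auto
  have part3: "\<not> (\<exists>H F. symmetric_system H F \<and> (\<forall>h\<in>H. countable (tsupp h))
             \<and> conj_group \<pi> (G1cas \<rho>) = H \<and> conj_filter \<pi> (F1cas \<rho>) = F)" if bij: "bij \<pi>" for \<pi>
  proof
    assume "\<exists>H F. symmetric_system H F \<and> (\<forall>h\<in>H. countable (tsupp h))
             \<and> conj_group \<pi> (G1cas \<rho>) = H \<and> conj_filter \<pi> (F1cas \<rho>) = F"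
    hence allc: "\<forall>h\<in>conj_group \<pi> (G1cas \<rho>). countable (tsupp h)" by blast
    let ?h = "relabel \<pi> \<circ> g \<circ> relabel (inv \<pi>)"
    have "?h \<in> conj_group \<pi> (G1cas \<rho>)" unfolding conj_group_def using gG by blast
    hence ch: "countable (tsupp ?h)" using allc by blast
    have "\<pi> ` X \<subseteq> tsupp ?h" using conj_tsupp[OF bij] gX by blast
    hence "countable (\<pi> ` X)" using ch countable_subset by blast
    hence "countable X" using bij by (meson bij_is_inj countable_image_inj_on inj_on_subset subset_UNIV)
    hence "countable (fst ` X)" by simp
    hence "countable (Succ \<rho> \<xi>)" using \<open>Succ \<rho> \<xi> \<subseteq> fst ` X\<close> countable_subset by blast
    thus False using stationary_uncountable[OF assms(1) st] by blast
  qed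
  show ?thesis using gG st2 unc unc2 part3 by blast
qed

end
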